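(* Let $I,J\subseteq\mathbb{R}$ be non-degenerate, bounded, closed intervals. For every $n\in\omega$ let $x_n$ be points of the interior of $I$, pairwise distinct, and let $A_n\subseteq J$ be dense in $J$. Then there exists an increasing bijection $f\colon I\to J$ such that $f(x_n)\in A_n$ for all $n\in\omega$. *)

theory Defs
  imports "HOL-Analysis.Analysis"
begin

end

theory Submission
  imports Defs
begin


definition lin :: "real \<Rightarrow> real \<Rightarrow> real \<Rightarrow> real \<Rightarrow> real \<Rightarrow> real" where
  "lin p q p' q' t = p' + (t - p) * (q' - p') / (q - p)"

lemma lin_mono: "p < q \<Longrightarrow> p' \<le> q' \<Longrightarrow> t \<le> s \<Longrightarrow> lin p q p' q' t \<le> lin p q p' q' s"
  unfolding lin_def by (intro add_left_mono divide_right_mono mult_right_mono) auto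

lemma lin_range: "p < q \<Longrightarrow> p' \<le> q' \<Longrightarrow> p \<le> t \<Longrightarrow> t \<le> q \<Longrightarrow> p' \<le> lin p q p' q' t \<and> lin p q p' q' t \<le> q'"
proof -
  assume a: "p < q" "p' \<le> q'" "p \<le> t" "t \<le> q"
  have "lin p q p' q' p \<le> lin p q p' q' t" "lin p q p' q' t \<le> lin p q p' q' q"
    using a by (auto intro!: lin_mono)
  then show ?thesis using a by (simp add: lin_def)
qed

lemma lin_strict: "p < q \<Longrightarrow> p' < q' \<Longrightarrow> t < s \<Longrightarrow> lin p q p' q' t < lin p q p' q' s"
  unfolding lin_def by (intro add_strict_left_mono divide_strict_right_mono mult_strict_right_mono) auto

lemma lin_inv: assumes "p < q" "p' < q'" shows "lin p' q' p q (lin p q p' q' t) = t"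
proof -
  have "lin p' q' p q (lin p q p' q' t) = p + ((t - p) * (q' - p') / (q - p)) * (q - p) / (q' - p')"
    by (simp add: lin_def)
  also have "\<dots> = p + (t - p)"
  proof -
    have "q - p \<noteq> 0" "q' - p' \<noteq> 0" using assms by auto
    then show ?thesis by simp
  qed
  finally show ?thesis by simp
qed

lemma lin_ends[simp]: "p < q \<Longrightarrow> lin p q p' q' p = p'" "p < q \<Longrightarrow> lin p q p' q' q = q'"
  unfolding lin_def by simp_all

lemma abs_le_one_mult: "0 \<le> (y::real) \<Longrightarrow> y \<le> 1 \<Longrightarrow> \<bar>y*b\<bar> \<le> \<bar>b\<bar>"
  by (simp add: abs_mult mult_left_le_one_le)

definition bump :: "real \<Rightarrow> real \<Rightarrow> real \<Rightarrow> real \<Rightarrow> real \<Rightarrow> real" where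
  "bump l m m' r t = (if t \<le> l then t else if t \<le> m then lin l m l m' t
     else if t \<le> r then lin m r m' r t else t)"

locale bumpl =
  fixes l m m' r :: real
  assumes lm: "l < m" and mr: "m < r" and lm': "l < m'" and mr': "m' < r"
begin

lemma b_out: "t \<le> l \<or> r \<le> t \<Longrightarrow> bump l m m' r t = t"
  using lm mr by (auto simp: bump_def lin_def)

lemma b_mid: "bump l m m' r m = m'"
  using lm mr by (auto simp: bump_def)

lemma b_inv: "bump l m' m r (bump l m m' r t) = t"
proof -
  consider "t \<le> l" | "l < t" "t \<le> m" | "m < t" "t \<le> r" | "r < t" by linarith
  then show ?thesis
  proof cases
    case 1 then show ?thesis by (simp add: b_out bumpl.b_out[OF bumpl.intro] lm mr lm' mr')
  next
    case 2
    have "lin l m l m' l < lin l m l m' t" "lin l m l m' t \<le> lin l m l m' m"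
      using 2 lm lm' lin_strict[of l m l m' l t] lin_mono[of l m l m' t m] by auto
    then have "l < lin l m l m' t" "lin l m l m' t \<le> m'" using lm by simp_all
    then show ?thesis using 2 lm lm' by (simp add: bump_def lin_inv)
  next
    case 3
    have "lin m r m' r m < lin m r m' r t" "lin m r m' r t \<le> lin m r m' r r"
      using 3 mr mr' lin_strict[of m r m' r m t] lin_mono[of m r m' r t r] by auto
    then have "m' < lin m r m' r t" "lin m r m' r t \<le> r" using mr by simp_all
    then show ?thesis using 3 lm lm' mr mr' by (simp add: bump_def lin_inv)
  next
    case 4 then show ?thesis using lm mr lm' mr' by (simp add: bump_def)
  qed
qed

lemma b_range: "t \<le> l \<Longrightarrow> bump l m m' r t \<le> l"
  "l \<le> t \<Longrightarrow> t \<le> m \<Longrightarrow> l \<le> bump l m m' r t \<and> bump l m m' r t \<le> m'"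
  "m \<le> t \<Longrightarrow> t \<le> r \<Longrightarrow> m' \<le> bump l m m' r t \<and> bump l m m' r t \<le> r"
  "r \<le> t \<Longrightarrow> r \<le> bump l m m' r t"
  using lm mr lm' mr' lin_range[of l m l m' t] lin_range[of m r m' r t]
  by (auto simp: bump_def lin_def)

lemma b_mono: assumes "t \<le> s" shows "bump l m m' r t \<le> bump l m m' r s"
proof -
  have p1: "lin l m l m' t \<le> lin l m l m' s" and p2: "lin m r m' r t \<le> lin m r m' r s"
    using assms lm mr lm' mr' by (auto intro!: lin_mono)
  consider "s \<le> l" | "l \<le> s" "s \<le> m" | "m \<le> s" "s \<le> r" | "r \<le> s" by linarith
  then show ?thesis
  proof cases
    case 1 then show ?thesis using assms by (simp add: b_out)
  next
    case 2
    then show ?thesis using assms p1 b_range[of t] b_range[of s]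
      by (cases "t \<le> l") (auto simp: bump_def)
  next
    case 3
    then show ?thesis using assms p2 b_range[of t] b_range[of s] lm'  mr' lm mr
      by (cases "t \<le> m") (auto simp: bump_def)
  next
    case 4
    show ?thesis
    proof (cases "t \<le> l")
      case True then show ?thesis using assms 4 b_out[of t] b_out[of s] by simp
    next
      case False
      show ?thesis
      proof (cases "t \<le> r")
        case True
        have "bump l m m' r t \<le> r"
          using True False b_range[of t] lm mr lm' mr' by (cases "t \<le> m") auto
        then show ?thesis using 4 b_range(4)[of s] by linarith
      next
        case False
        then show ?thesis using assms b_out[of t] b_out[of s] by auto
      qed
    qed
  qed
qed

lemma b_cont: "continuous_on UNIV (bump l m m' r)"
proof -
  have c1: "continuous_on S (lin p q p' q')" for S p q p' q'
  proof -
    have "lin p q p' q' = (\<lambda>t. p' + (t - p) * ((q' - p') / (q - p)))"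
      by (auto simp: lin_def fun_eq_iff)
    then show ?thesis unfolding \<open>lin p q p' q' = _\<close> by (intro continuous_intros)
  qed
  have "continuous_on {t. m \<le> t} (\<lambda>t. if t \<le> r then lin m r m' r t else t)"
    using mr by (intro continuous_on_cases_1 c1) auto
  then have "continuous_on {t. l \<le> t} (\<lambda>t. if t \<le> m then lin l m l m' t else if t \<le> r then lin m r m' r t else t)"
    using lm mr by (intro continuous_on_cases_1 c1) (auto elim: continuous_on_subset)
  then have "continuous_on UNIV (\<lambda>t. if t \<le> l then t else if t \<le> m then lin l m l m' t else if t \<le> r then lin m r m' r t else t)"
    using lm mr by (intro continuous_on_cases_1 c1) auto
  then show ?thesis unfolding bump_def[abs_def] .
qed

lemma b_close: "\<bar>bump l m m' r t - t\<bar> \<le> \<bar>m' - m\<bar>"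
proof -
  consider "t \<le> l" | "l < t" "t \<le> m" | "m < t" "t \<le> r" | "r < t" by linarith
  then show ?thesis
  proof cases
    case 2
    have e: "lin l m l m' t - t = ((t - l) / (m - l)) * (m' - m)"
      using lm unfolding lin_def by (simp add: field_simps)
    have "(t - l) / (m - l) \<le> 1" "0 \<le> (t - l) / (m - l)" using 2 lm by auto
    then have "\<bar>((t - l) / (m - l)) * (m' - m)\<bar> \<le> \<bar>m' - m\<bar>"
      by (intro abs_le_one_mult) auto
    then show ?thesis using 2 e by (simp add: bump_def)
  next
    case 3
    have e: "lin m r m' r t - t = ((r - t) / (r - m)) * (m' - m)"
      using mr unfolding lin_def by (simp add: field_simps)
    have "(r - t) / (r - m) \<le> 1" "0 \<le> (r - t) / (r - m)" using 3 mr by auto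
    then have "\<bar>((r - t) / (r - m)) * (m' - m)\<bar> \<le> \<bar>m' - m\<bar>"
      by (intro abs_le_one_mult) auto
    then show ?thesis using 3 e lm by (simp add: bump_def)
  qed (auto simp: b_out)
qed

lemma b_in: assumes "c \<le> l" "r \<le> d" "t \<in> {c..d}" shows "bump l m m' r t \<in> {c..d}"
proof (cases "t \<le> l \<or> r \<le> t")
  case True then show ?thesis using assms b_out by simp
next
  case False
  then have "l \<le> bump l m m' r t \<and> bump l m m' r t \<le> r"
    using b_range[of t] lm mr lm' mr' by (cases "t \<le> m") auto
  then show ?thesis using assms by auto
qed

end



definition hpair :: "real \<Rightarrow> real \<Rightarrow> (real \<Rightarrow> real) \<Rightarrow> (real \<Rightarrow> real) \<Rightarrow> bool" where
  "hpair c d G H \<longleftrightarrow> (\<forall>t\<in>{c..d}. G t \<in> {c..d} \<and> H t \<in> {c..d} \<and> H (G t) = t \<and> G (H t) = t)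
     \<and> mono_on {c..d} G \<and> continuous_on {c..d} G \<and> continuous_on {c..d} H"

lemma hpair_id: "hpair c d id id"
  unfolding hpair_def by (simp add: mono_on_def)

lemma hpair_ends:
  assumes "hpair c d G H" "c \<le> d" shows "G c = c" "G d = d"
proof -
  have "G (H c) = c" "H c \<in> {c..d}" "G c \<in> {c..d}" "G (H d) = d" "H d \<in> {c..d}" "G d \<in> {c..d}"
    using assms unfolding hpair_def by auto
  moreover have "mono_on {c..d} G" using assms unfolding hpair_def by auto
  ultimately have "G c \<le> G (H c)" "G (H d) \<le> G d" using assms(2)
    by (metis atLeastAtMost_iff mono_onD order_refl, metis atLeastAtMost_iff mono_onD order_refl)
  then show "G c = c" "G d = d" using \<open>G (H c) = c\<close> \<open>G (H d) = d\<close> \<open>G c \<in> {c..d}\<close> \<open>G d \<in> {c..d}\<close> by auto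
qed

lemma step:
  assumes hp: "hpair c d G H" and z: "z \<in> {c<..<d}" and fin: "finite Y" and nY: "G z \<notin> Y"
    and dense: "{c..d} \<subseteq> closure A" and e: "e > 0"
  shows "\<exists>G' H'. hpair c d G' H' \<and> G' z \<in> A \<and> (\<forall>t\<in>{c..d}. G t \<in> Y \<longrightarrow> G' t = G t)
     \<and> (\<forall>t\<in>{c..d}. \<bar>G' t - G t\<bar> \<le> e \<and> \<bar>H' t - H t\<bar> \<le> e)"
proof -
  have cd: "c < d" using z by auto
  define w where "w = G z"
  have Gc: "G c = c" and Gd: "G d = d" using hpair_ends[OF hp] cd by auto
  have HG: "\<And>t. t \<in> {c..d} \<Longrightarrow> H (G t) = t" and GH: "\<And>t. t \<in> {c..d} \<Longrightarrow> G (H t) = t"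
    and Gin: "\<And>t. t \<in> {c..d} \<Longrightarrow> G t \<in> {c..d}" and Hin: "\<And>t. t \<in> {c..d} \<Longrightarrow> H t \<in> {c..d}"
    and mG: "mono_on {c..d} G" and cG: "continuous_on {c..d} G" and cH: "continuous_on {c..d} H"
    using hp unfolding hpair_def by auto
  have zin: "z \<in> {c..d}" using z by auto
  have "w \<in> {c..d}" using Gin[OF zin] w_def by simp
  moreover have "w \<noteq> c"
  proof
    assume "w = c"
    then have "H (G z) = H (G c)" using Gc w_def by simp
    then have "z = c" using HG[OF zin] HG[of c] cd by simp
    then show False using z by simp
  qed
  moreover have "w \<noteq> d"
  proof
    assume "w = d"
    then have "H (G z) = H (G d)" using Gd w_def by simp
    then have "z = d" using HG[OF zin] HG[of d] cd by simp
    then show False using z by simp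
  qed
  ultimately have w: "c < w" "w < d" by auto
  obtain \<delta> where \<delta>: "\<delta> > 0" "\<And>u v. u \<in> {c..d} \<Longrightarrow> v \<in> {c..d} \<Longrightarrow> dist u v < \<delta> \<Longrightarrow> dist (H u) (H v) < e"
  proof -
    have "uniformly_continuous_on {c..d} H" using compact_uniformly_continuous[OF cH compact_Icc] .
    then obtain \<delta> where "\<delta> > 0" "\<forall>x\<in>{c..d}. \<forall>x'\<in>{c..d}. dist x' x < \<delta> \<longrightarrow> dist (H x') (H x) < e"
      using e unfolding uniformly_continuous_on_def by blast
    then show ?thesis using that by blast
  qed
  obtain \<rho> where \<rho>: "\<rho> > 0" "\<forall>y\<in>Y. y \<noteq> w \<longrightarrow> \<rho> \<le> dist w y"
    using finite_set_avoid[OF fin, of w] by auto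
  define \<eta> where "\<eta> = min (min \<rho> (w - c)) (d - w) / 2"
  have \<eta>: "\<eta> > 0" "\<eta> < w - c" "\<eta> < d - w" using \<rho> w unfolding \<eta>_def by auto
  have \<eta>Y: "\<And>y. y \<in> Y \<Longrightarrow> \<eta> < \<bar>y - w\<bar>"
  proof -
    fix y assume "y \<in> Y"
    then have "y \<noteq> w" using nY w_def by auto
    then have "\<rho> \<le> \<bar>y - w\<bar>" using \<rho> \<open>y \<in> Y\<close> by (auto simp: dist_real_def)
    moreover have "\<eta> \<le> \<rho> / 2" unfolding \<eta>_def by (simp add: divide_right_mono)
    ultimately show "\<eta> < \<bar>y - w\<bar>" using \<rho> by linarith
  qed
  have "w \<in> closure A" using dense \<open>w \<in> {c..d}\<close> by auto
  then obtain y where y: "y \<in> A" "dist y w < min \<delta> (min \<eta> e)"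
  proof -
    have "min \<delta> (min \<eta> e) > 0" using \<delta> \<eta> e by simp
    then show ?thesis using \<open>w \<in> closure A\<close> that unfolding closure_approachable by blast
  qed
  define l where "l = w - \<eta>"
  define r where "r = w + \<eta>"
  have yl: "l < y" "y < r" using y(2) unfolding l_def r_def dist_real_def by auto
  have lc: "c \<le> l" "r \<le> d" using \<eta> unfolding l_def r_def by auto
  interpret B1: bumpl l w y r using yl \<eta> unfolding l_def r_def by unfold_locales auto
  interpret B2: bumpl l y w r using yl \<eta> unfolding l_def r_def by unfold_locales auto
  define G' where "G' = (\<lambda>t. bump l w y r (G t))"
  define H' where "H' = (\<lambda>t. H (bump l y w r t))"
  have f1: "hpair c d G' H'"
    unfolding hpair_def
  proof (intro conjI ballI)
    fix t assume t: "t \<in> {c..d}"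
    show "G' t \<in> {c..d}" unfolding G'_def using B1.b_in[OF lc Gin[OF t]] .
    show "H' t \<in> {c..d}" unfolding H'_def using Hin[OF B2.b_in[OF lc t]] .
    show "H' (G' t) = t" unfolding H'_def G'_def using B1.b_inv HG[OF t] by simp
    show "G' (H' t) = t" unfolding H'_def G'_def using B2.b_inv GH[OF B2.b_in[OF lc t]] by simp
  next
    show "mono_on {c..d} G'" unfolding G'_def
    proof (rule mono_onI)
      fix u v assume "u \<in> {c..d}" "v \<in> {c..d}" "u \<le> v"
      then have "G u \<le> G v" using mono_onD[OF mG] by blast
      then show "bump l w y r (G u) \<le> bump l w y r (G v)" by (rule B1.b_mono)
    qed
    show "continuous_on {c..d} G'" unfolding G'_def
      by (rule continuous_on_compose2[OF B1.b_cont cG]) auto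
    show "continuous_on {c..d} H'" unfolding H'_def
      by (rule continuous_on_compose2[OF cH continuous_on_subset[OF B2.b_cont, of "{c..d}"]]) (use B2.b_in[OF lc] in auto)
  qed
  have f2: "G' z \<in> A" unfolding G'_def using B1.b_mid y w_def by simp
  have f3: "\<forall>t\<in>{c..d}. G t \<in> Y \<longrightarrow> G' t = G t"
  proof (intro ballI impI)
    fix t assume "G t \<in> Y"
    then have "G t \<le> l \<or> r \<le> G t" using \<eta>Y[of "G t"] unfolding l_def r_def by auto
    then show "G' t = G t" unfolding G'_def using B1.b_out by simp
  qed
  have f4: "\<forall>t\<in>{c..d}. \<bar>G' t - G t\<bar> \<le> e \<and> \<bar>H' t - H t\<bar> \<le> e"
  proof
    fix t assume t: "t \<in> {c..d}"
    have "\<bar>G' t - G t\<bar> \<le> \<bar>y - w\<bar>" unfolding G'_def by (rule B1.b_close)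
    then have 1: "\<bar>G' t - G t\<bar> \<le> e" using y(2) by (auto simp: dist_real_def)
    have "\<bar>bump l y w r t - t\<bar> \<le> \<bar>w - y\<bar>" by (rule B2.b_close)
    then have "dist (bump l y w r t) t < \<delta>" using y(2) by (auto simp: dist_real_def)
    then have "dist (H' t) (H t) < e" unfolding H'_def using \<delta>(2)[OF B2.b_in[OF lc t] t] by simp
    then show "\<bar>G' t - G t\<bar> \<le> e \<and> \<bar>H' t - H t\<bar> \<le> e" using 1 by (simp add: dist_real_def)
  qed
  show ?thesis
    by (rule exI[where x=G'], rule exI[where x=H']) (intro conjI f1 f2 f3 f4)
qed



lemma half_pow_small: "e > 0 \<Longrightarrow> \<exists>M. \<forall>n\<ge>M. (1/2::real)^n < e"
proof -
  assume "e > 0"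
  then obtain M where M: "(1/2::real)^M < e" using real_arch_pow_inv[of e "1/2"] by auto
  have "\<forall>n\<ge>M. (1/2::real)^n < e"
  proof (intro allI impI)
    fix n assume "M \<le> n"
    then have "(1/2::real)^n \<le> (1/2)^M" by (intro power_decreasing) auto
    then show "(1/2::real)^n < e" using M by linarith
  qed
  then show ?thesis by blast
qed

lemma conv_geom:
  fixes X :: "nat \<Rightarrow> real"
  assumes "\<And>n. \<bar>X n - l\<bar> \<le> 2 * (1/2)^n"
  shows "X \<longlonglongrightarrow> l"
proof (rule LIMSEQ_I)
  fix r :: real assume "r > 0"
  then obtain M where M: "\<forall>n\<ge>M. (1/2::real)^n < r/2" using half_pow_small[of "r/2"] by auto
  show "\<exists>no. \<forall>n\<ge>no. norm (X n - l) < r"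
  proof (intro exI allI impI)
    fix n assume "M \<le> n"
    then show "norm (X n - l) < r" using M assms[of n] by auto
  qed
qed

lemma unif_lim:
  fixes F :: "nat \<Rightarrow> real \<Rightarrow> real"
  assumes B: "\<And>n m t. n \<le> m \<Longrightarrow> t \<in> S \<Longrightarrow> \<bar>F m t - F n t\<bar> \<le> 2 * (1/2)^n"
  shows "\<exists>Fl. \<forall>n. \<forall>t\<in>S. \<bar>Fl t - F n t\<bar> \<le> 2 * (1/2)^n"
proof -
  have conv: "convergent (\<lambda>n. F n t)" if t: "t \<in> S" for t
  proof -
    have "Cauchy (\<lambda>n. F n t)"
    proof (rule metric_CauchyI)
      fix e :: real assume "e > 0"
      then obtain M where M: "\<forall>n\<ge>M. (1/2::real)^n < e/4" using half_pow_small[of "e/4"] by auto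
      show "\<exists>M. \<forall>m\<ge>M. \<forall>n\<ge>M. dist (F m t) (F n t) < e"
      proof (intro exI allI impI)
        fix m n assume "M \<le> m" "M \<le> n"
        have "\<bar>F m t - F M t\<bar> \<le> 2 * (1/2)^M" "\<bar>F n t - F M t\<bar> \<le> 2 * (1/2)^M"
          using B \<open>M \<le> m\<close> \<open>M \<le> n\<close> t by auto
        moreover have "(1/2::real)^M < e/4" using M by auto
        ultimately show "dist (F m t) (F n t) < e" by (simp add: dist_real_def)
      qed
    qed
    then show ?thesis by (simp add: Cauchy_convergent_iff)
  qed
  define Fl where "Fl t = lim (\<lambda>n. F n t)" for t
  have lim: "(\<lambda>n. F n t) \<longlonglongrightarrow> Fl t" if "t \<in> S" for t
    using conv[OF that] unfolding Fl_def by (simp add: convergent_LIMSEQ_iff)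
  have "\<bar>Fl t - F n t\<bar> \<le> 2 * (1/2)^n" if t: "t \<in> S" for n t
  proof (rule LIMSEQ_le_const2)
    show "(\<lambda>m. \<bar>F m t - F n t\<bar>) \<longlonglongrightarrow> \<bar>Fl t - F n t\<bar>"
      by (intro tendsto_intros lim t)
    show "\<exists>N. \<forall>m\<ge>N. \<bar>F m t - F n t\<bar> \<le> 2 * (1/2)^n"
      using B t by blast
  qed
  then show ?thesis by blast
qed

lemma unif_cont:
  fixes F :: "nat \<Rightarrow> real \<Rightarrow> real"
  assumes B: "\<forall>n. \<forall>t\<in>S. \<bar>Fl t - F n t\<bar> \<le> 2 * (1/2)^n" and C: "\<forall>n. continuous_on S (F n)"
  shows "continuous_on S Fl"
proof (rule uniform_limit_theorem[where F=sequentially and A=S and f=F and l=Fl])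
  show "\<forall>\<^sub>F n in sequentially. continuous_on S (F n)" using C by simp
  show "uniform_limit S F Fl sequentially"
    unfolding uniform_limit_sequentially_iff
  proof (intro allI impI)
    fix e :: real assume "e > 0"
    then obtain M where M: "\<forall>n\<ge>M. (1/2::real)^n < e/2" using half_pow_small[of "e/2"] by auto
    show "\<exists>N. \<forall>n\<ge>N. \<forall>x\<in>S. dist (F n x) (Fl x) < e"
    proof (intro exI allI impI ballI)
      fix n x assume "M \<le> n" "x \<in> S"
      then have "\<bar>Fl x - F n x\<bar> \<le> 2 * (1/2)^n" "(1/2::real)^n < e/2" using M B by auto
      then show "dist (F n x) (Fl x) < e" by (simp add: dist_real_def abs_minus_commute)
    qed
  qed
qed simp

theorem lemma2p4:
  fixes a b c d :: real
    and x :: "nat \<Rightarrow> real"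
    and A :: "nat \<Rightarrow> real set"
  assumes "a < b" and "c < d"
    and "\<And>n. x n \<in> {a<..<b}"
    and "inj x"
    and "\<And>n. A n \<subseteq> {c..d}"
    and "\<And>n. {c..d} \<subseteq> closure (A n)"
  shows "\<exists>f. bij_betw f {a..b} {c..d} \<and> strict_mono_on {a..b} f \<and> (\<forall>n. f (x n) \<in> A n)"
proof -
  note ab = assms(1) and cd = assms(2) and xin = assms(3) and injx = assms(4) and dense = assms(6)
  define L where "L = lin a b c d"
  define z where "z n = L (x n)" for n
  have Lin: "L t \<in> {c..d}" if "t \<in> {a..b}" for t
    using lin_range[of a b c d t] that ab cd unfolding L_def by auto
  have Lstrict: "L u < L v" if "u < v" for u v
    using lin_strict[of a b c d u v] that ab cd unfolding L_def by auto
  have zin: "z n \<in> {c<..<d}" for n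
  proof -
    have "L a < L (x n)" "L (x n) < L b" using xin[of n] by (auto intro!: Lstrict)
    then show ?thesis using ab unfolding z_def L_def by simp
  qed
  have injz: "z k = z n \<Longrightarrow> k = n" for k n
  proof -
    assume "z k = z n"
    then have "x k = x n" unfolding z_def using Lstrict by (metis linorder_neqE_linordered_idom less_irrefl)
    then show "k = n" using injx by (simp add: inj_eq)
  qed
  define P where "P n p q \<longleftrightarrow> hpair c d (fst q) (snd q) \<and> fst q (z n) \<in> A n
      \<and> (\<forall>k<n. fst q (z k) = fst p (z k))
      \<and> (\<forall>t\<in>{c..d}. \<bar>fst q t - fst p t\<bar> \<le> (1/2)^n \<and> \<bar>snd q t - snd p t\<bar> \<le> (1/2)^n)"
    for n :: nat and p q :: "(real \<Rightarrow> real) \<times> (real \<Rightarrow> real)"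
  have ex: "\<exists>q. P n p q" if hp: "hpair c d (fst p) (snd p)" for n p
  proof -
    let ?G = "fst p" and ?H = "snd p"
    have HG: "\<And>t. t \<in> {c..d} \<Longrightarrow> ?H (?G t) = t" using hp unfolding hpair_def by auto
    have "?G (z n) \<notin> (\<lambda>k. ?G (z k)) ` {..<n}"
    proof
      assume "?G (z n) \<in> (\<lambda>k. ?G (z k)) ` {..<n}"
      then obtain k where k: "k < n" "?G (z n) = ?G (z k)" by auto
      then have "?H (?G (z n)) = ?H (?G (z k))" by simp
      then have "z n = z k" using HG zin by (metis greaterThanLessThan_iff atLeastAtMost_iff less_imp_le)
      then show False using injz k(1) by force
    qed
    from step[OF hp zin[of n] _ this dense[of n], of "(1/2)^n"]
    obtain G' H' where "hpair c d G' H'" "G' (z n) \<in> A n"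
      "\<forall>t\<in>{c..d}. ?G t \<in> (\<lambda>k. ?G (z k)) ` {..<n} \<longrightarrow> G' t = ?G t"
      "\<forall>t\<in>{c..d}. \<bar>G' t - ?G t\<bar> \<le> (1/2)^n \<and> \<bar>H' t - ?H t\<bar> \<le> (1/2)^n"
      by auto
    moreover have "\<forall>k<n. G' (z k) = ?G (z k)"
      using calculation(3) zin by (metis greaterThanLessThan_iff atLeastAtMost_iff less_imp_le image_eqI lessThan_iff)
    ultimately have "P n p (G', H')" unfolding P_def by simp
    then show ?thesis by blast
  qed
  define S where "S n p = (SOME q. P n p q)" for n p
  have S: "P n p (S n p)" if "hpair c d (fst p) (snd p)" for n p
    unfolding S_def using ex[OF that] by (rule someI_ex)
  define sq where "sq = rec_nat (id, id) S"
  have sq0: "sq 0 = (id, id)" and sqS: "sq (Suc n) = S n (sq n)" for n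
    unfolding sq_def by simp_all
  define GG where "GG n = fst (sq n)" for n
  define HH where "HH n = snd (sq n)" for n
  have hp: "hpair c d (GG n) (HH n)" for n
  proof (induction n)
    case 0 then show ?case unfolding GG_def HH_def sq0 using hpair_id[of c d] by (simp add: id_def)
  next
    case (Suc n) then show ?case using S[of "sq n" n] unfolding GG_def HH_def sqS P_def by simp
  qed
  have Pn: "P n (sq n) (sq (Suc n))" for n
    unfolding sqS using S hp unfolding GG_def HH_def by blast
  have inA: "GG (Suc n) (z n) \<in> A n" for n using Pn[of n] unfolding P_def GG_def by simp
  have fixk: "GG (Suc m) (z k) = GG m (z k)" if "k < m" for k m
    using Pn[of m] that unfolding P_def GG_def by simp
  have stepG: "\<bar>GG (Suc m) t - GG m t\<bar> \<le> (1/2)^m" and stepH: "\<bar>HH (Suc m) t - HH m t\<bar> \<le> (1/2)^m"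
    if "t \<in> {c..d}" for m t
    using Pn[of m] that unfolding P_def GG_def HH_def by auto
  have boundG: "\<bar>GG m t - GG n t\<bar> \<le> 2 * (1/2)^n - 2 * (1/2)^m"
    and boundH: "\<bar>HH m t - HH n t\<bar> \<le> 2 * (1/2)^n - 2 * (1/2)^m"
    if "n \<le> m" "t \<in> {c..d}" for n m t
    using that(1)
  proof (induction m rule: dec_induct)
    case base
    { case 1 show ?case by simp }
    { case 2 show ?case by simp }
  next
    case (step m)
    { case 1
      have "\<bar>GG (Suc m) t - GG n t\<bar> \<le> \<bar>GG (Suc m) t - GG m t\<bar> + \<bar>GG m t - GG n t\<bar>" by linarith
      then show ?case using step.IH(1) stepG[OF that(2), of m] by simp }
    { case 2
      have "\<bar>HH (Suc m) t - HH n t\<bar> \<le> \<bar>HH (Suc m) t - HH m t\<bar> + \<bar>HH m t - HH n t\<bar>" by linarith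
      then show ?case using step.IH(2) stepH[OF that(2), of m] by simp }
  qed
  have bG: "\<bar>GG m t - GG n t\<bar> \<le> 2 * (1/2)^n" if "n \<le> m" "t \<in> {c..d}" for n m t
  proof -
    have "(0::real) \<le> (1/2)^m" by simp
    then show ?thesis using boundG[OF that] by linarith
  qed
  have bH: "\<bar>HH m t - HH n t\<bar> \<le> 2 * (1/2)^n" if "n \<le> m" "t \<in> {c..d}" for n m t
  proof -
    have "(0::real) \<le> (1/2)^m" by simp
    then show ?thesis using boundH[OF that] by linarith
  qed
  obtain Gl where Gl: "\<forall>n. \<forall>t\<in>{c..d}. \<bar>Gl t - GG n t\<bar> \<le> 2 * (1/2)^n"
    using unif_lim[of "{c..d}" GG] bG by blast
  obtain Hl where Hl: "\<forall>n. \<forall>t\<in>{c..d}. \<bar>Hl t - HH n t\<bar> \<le> 2 * (1/2)^n"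
    using unif_lim[of "{c..d}" HH] bH by blast
  have cGl: "continuous_on {c..d} Gl"
    by (rule unif_cont[OF Gl]) (use hp in \<open>auto simp: hpair_def\<close>)
  have cHl: "continuous_on {c..d} Hl"
    by (rule unif_cont[OF Hl]) (use hp in \<open>auto simp: hpair_def\<close>)
  have limG: "(\<lambda>n. GG n t) \<longlonglongrightarrow> Gl t" if "t \<in> {c..d}" for t
    by (rule conv_geom) (use Gl that in \<open>auto simp: abs_minus_commute\<close>)
  have limH: "(\<lambda>n. HH n t) \<longlonglongrightarrow> Hl t" if "t \<in> {c..d}" for t
    by (rule conv_geom) (use Hl that in \<open>auto simp: abs_minus_commute\<close>)
  have GGin: "GG n t \<in> {c..d}" and HHin: "HH n t \<in> {c..d}" if "t \<in> {c..d}" for n t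
    using hp[of n] that unfolding hpair_def by auto
  have Glin: "Gl t \<in> {c..d}" if t: "t \<in> {c..d}" for t
  proof -
    have "c \<le> Gl t" using LIMSEQ_le[OF tendsto_const limG[OF t]] GGin[OF t] by auto
    moreover have "Gl t \<le> d" using LIMSEQ_le[OF limG[OF t] tendsto_const] GGin[OF t] by auto
    ultimately show ?thesis by simp
  qed
  have Hlin: "Hl t \<in> {c..d}" if t: "t \<in> {c..d}" for t
  proof -
    have "c \<le> Hl t" using LIMSEQ_le[OF tendsto_const limH[OF t]] HHin[OF t] by auto
    moreover have "Hl t \<le> d" using LIMSEQ_le[OF limH[OF t] tendsto_const] HHin[OF t] by auto
    ultimately show ?thesis by simp
  qed
  have Glmono: "Gl u \<le> Gl v" if "u \<in> {c..d}" "v \<in> {c..d}" "u \<le> v" for u v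
  proof (rule LIMSEQ_le[OF limG[OF that(1)] limG[OF that(2)]])
    have "GG n u \<le> GG n v" for n
      using hp[of n] that unfolding hpair_def by (metis mono_onD)
    then show "\<exists>N. \<forall>n\<ge>N. GG n u \<le> GG n v" by blast
  qed
  have GlHl: "Gl (Hl y) = y" if y: "y \<in> {c..d}" for y
  proof (rule LIMSEQ_unique)
    show "(\<lambda>n. Gl (HH n y)) \<longlonglongrightarrow> Gl (Hl y)"
      by (rule continuous_on_tendsto_compose[OF cGl limH[OF y] Hlin[OF y]]) (use HHin[OF y] in auto)
    show "(\<lambda>n. Gl (HH n y)) \<longlonglongrightarrow> y"
    proof (rule conv_geom)
      fix n
      have "GG n (HH n y) = y" using hp[of n] y unfolding hpair_def by auto
      then show "\<bar>Gl (HH n y) - y\<bar> \<le> 2 * (1/2)^n" using Gl HHin[OF y] by metis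
    qed
  qed
  have HlGl: "Hl (Gl y) = y" if y: "y \<in> {c..d}" for y
  proof (rule LIMSEQ_unique)
    show "(\<lambda>n. Hl (GG n y)) \<longlonglongrightarrow> Hl (Gl y)"
      by (rule continuous_on_tendsto_compose[OF cHl limG[OF y] Glin[OF y]]) (use GGin[OF y] in auto)
    show "(\<lambda>n. Hl (GG n y)) \<longlonglongrightarrow> y"
    proof (rule conv_geom)
      fix n
      have "HH n (GG n y) = y" using hp[of n] y unfolding hpair_def by auto
      then show "\<bar>Hl (GG n y) - y\<bar> \<le> 2 * (1/2)^n" using Hl GGin[OF y] by metis
    qed
  qed
  define Li where "Li = lin c d a b"
  have Liin: "Li t \<in> {a..b}" if "t \<in> {c..d}" for t
    using lin_range[of c d a b t] that ab cd unfolding Li_def by auto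
  have LiL: "Li (L t) = t" for t unfolding Li_def L_def using lin_inv ab cd by simp
  have LLi: "L (Li t) = t" for t unfolding Li_def L_def using lin_inv ab cd by simp
  define f where "f t = Gl (L t)" for t
  have "bij_betw f {a..b} {c..d}"
  proof (rule bij_betw_byWitness[where f' = "\<lambda>y. Li (Hl y)"])
    show "\<forall>t\<in>{a..b}. Li (Hl (f t)) = t" unfolding f_def using HlGl Lin LiL by simp
    show "\<forall>y\<in>{c..d}. f (Li (Hl y)) = y" unfolding f_def using GlHl Hlin LLi by simp
    show "f ` {a..b} \<subseteq> {c..d}" unfolding f_def using Glin Lin by auto
    show "(\<lambda>y. Li (Hl y)) ` {c..d} \<subseteq> {a..b}" using Liin Hlin by auto
  qed
  moreover have "strict_mono_on {a..b} f"
  proof (rule strict_mono_onI)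
    fix u v assume uv: "u \<in> {a..b}" "v \<in> {a..b}" "u < v"
    have "L u < L v" by (rule Lstrict[OF uv(3)])
    then have le: "Gl (L u) \<le> Gl (L v)" using Glmono Lin uv by auto
    have "Gl (L u) \<noteq> Gl (L v)" using HlGl Lin uv \<open>L u < L v\<close> by (metis less_irrefl)
    then show "f u < f v" unfolding f_def using le by simp
  qed
  moreover have "\<forall>n. f (x n) \<in> A n"
  proof
    fix n
    have zn: "z n \<in> {c..d}" using zin[of n] by auto
    have eq: "GG (m + Suc n) (z n) = GG (Suc n) (z n)" for m
    proof (induction m)
      case (Suc m) then show ?case using fixk[of n "m + Suc n"] by simp
    qed simp
    have "(\<lambda>m. GG (m + Suc n) (z n)) \<longlonglongrightarrow> Gl (z n)"
      by (rule LIMSEQ_ignore_initial_segment[OF limG[OF zn]])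
    then have "Gl (z n) = GG (Suc n) (z n)" unfolding eq using LIMSEQ_unique tendsto_const by blast
    then show "f (x n) \<in> A n" unfolding f_def z_def[symmetric] using inA by simp
  qed
  ultimately show ?thesis by blast
qed

end
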